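(* In the LSM/LOOLSM setting of the context, for every exercise index $i$ and path $n$, the path-wise look-ahead bias satisfies $$\hat B^{[i]}_n\le I\Big[\,|\hat C^{[i]}_n-Z^{[i]}_n|\le h_n\,|V^{[i+1]}_n-Z^{[i]}_n|\,\Big]\;|V^{[i+1]}_n-Z^{[i]}_n|.$$
   Context: $N$ paths are simulated. At exercise time $t_i$ we are given: - discounted payouts $Z^{[i]}_n$; - next-step path-wise option values $V^{[i+1]}_n$; - an $N\times M$ regressor matrix $X$ of full rank with rows $x_n$. Let $H=X(X^\top X)^{-1}X^\top$ and let $h_n=x_n(X^\top X)^{-1}x_n^\top$ be the leverage, with $h_n<1$. Define: - the LSM continuation estimate $\hat C^{[i]}=HV^{[i+1]}$; - the leave-one-out estimate $\hat C'^{[i]}_n=\hat C^{[i]}_n-\dfrac{h_n(V^{[i+1]}_n-\hat C^{[i]}_n)}{1-h_n}$. The LSM update is $I[\hat C^{[i]}_n\ge Z^{[i]}_n](V^{[i+1]}_n-Z^{[i]}_n)+Z^{[i]}_n$, and the LOOLSM update is the same with $\hat C'^{[i]}_n$ in place of $\hat C^{[i]}_n$. The path-wise look-ahead bias is their difference: $$\hat B^{[i]}_n=\big(I[Z^{[i]}_n\le\hat C^{[i]}_n]-I[Z^{[i]}_n\le\hat C'^{[i]}_n]\big)(V^{[i+1]}_n-Z^{[i]}_n).$$ $I[\cdot]$ denotes the indicator function. *)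

theory Defs
  imports "HOL-Analysis.Analysis"
begin

text \<open>Regressor matrix X is N x M, rows indexed by type 'n (paths), columns by 'm.\<close>

definition hat_matrix :: "real^'m^'n \<Rightarrow> real^'n^'n" where
  "hat_matrix X = X ** matrix_inv (transpose X ** X) ** transpose X"

definition leverage :: "real^'m^'n \<Rightarrow> 'n \<Rightarrow> real" where
  "leverage X n = (X $ n) \<bullet> (matrix_inv (transpose X ** X) *v (X $ n))"

definition lsm_cont :: "real^'m^'n \<Rightarrow> real^'n \<Rightarrow> real^'n" where
  "lsm_cont X V = hat_matrix X *v V"

definition loo_cont :: "real^'m^'n \<Rightarrow> real^'n \<Rightarrow> 'n \<Rightarrow> real" where
  "loo_cont X V n = lsm_cont X V $ n
     - leverage X n * (V $ n - lsm_cont X V $ n) / (1 - leverage X n)"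

definition la_bias :: "real^'m^'n \<Rightarrow> real^'n \<Rightarrow> real^'n \<Rightarrow> 'n \<Rightarrow> real" where
  "la_bias X Z V n =
     (of_bool (Z $ n \<le> lsm_cont X V $ n) - of_bool (Z $ n \<le> loo_cont X V n)) * (V $ n - Z $ n)"

end

theory Submission
  imports Defs
begin

lemma aux:
  fixes C V Z h :: real
  assumes h: "h < 1"
  shows "(of_bool (Z \<le> C) - of_bool (Z \<le> C - h * (V - C) / (1 - h))) * (V - Z)
    \<le> of_bool (\<bar>C - Z\<bar> \<le> h * \<bar>V - Z\<bar>) * \<bar>V - Z\<bar>"
proof -
  have e: "C - h * (V - C) / (1 - h) = (C - h*V) / (1 - h)" using h
    by (simp add: field_simps)
  have iff: "(Z \<le> (C - h*V) / (1 - h)) = (Z * (1 - h) \<le> C - h*V)" using h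
    by (simp add: pos_le_divide_eq)
  show ?thesis unfolding e iff
    by (cases "Z \<le> C"; cases "Z * (1 - h) \<le> C - h*V"; cases "V \<le> Z";
        simp add: abs_if algebra_simps; smt (verit, best) mult_le_cancel_left)
qed

theorem lemmaA1:
  fixes X :: "nat \<Rightarrow> real^'m^'n" and Z :: "nat \<Rightarrow> real^'n" and V :: "nat \<Rightarrow> real^'n"
  assumes full_rank: "\<And>i. rank (X i) = CARD('m)"
    and lev_lt1: "\<And>i n. leverage (X i) n < 1"
  shows "la_bias (X i) (Z i) (V (Suc i)) n
    \<le> of_bool (\<bar>lsm_cont (X i) (V (Suc i)) $ n - Z i $ n\<bar>
                 \<le> leverage (X i) n * \<bar>V (Suc i) $ n - Z i $ n\<bar>)
       * \<bar>V (Suc i) $ n - Z i $ n\<bar>"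
  unfolding la_bias_def loo_cont_def by (rule aux[OF lev_lt1])

end
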